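(* Let $v_1,v_2\in L_2(0,1)$ be complex-valued and $\alpha\in[0,2\pi)$. Let $A(v_1,v_2,\alpha)$ be the operator in $L_2(0,1)$ acting by $$A(v_1,v_2,\alpha)\psi(x)=i\psi'(x)+v_1(x)\Big[\psi(0)-\tfrac{i}{2}\langle\psi,v_1\rangle\Big]+v_2(x)\Big[\psi(1)+\tfrac{i}{2}\langle\psi,v_2\rangle\Big]$$ on the domain of all $\psi\in W_2^1(0,1)$ satisfying $\psi(1)+i\langle\psi,v_2\rangle=e^{i\alpha}[\psi(0)-i\langle\psi,v_1\rangle]$. Then $A(v_1,v_2,\alpha)$ is symmetric in $L_2(0,1)$.
   Context: $\langle f,g\rangle=\int_0^1 f\bar g\,dx$; $W_2^1(0,1)$ is the Sobolev space. *)

theory Defs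
  imports "HOL-Analysis.Analysis"
begin

definition L2 :: "(real \<Rightarrow> complex) \<Rightarrow> bool" where
  "L2 f \<longleftrightarrow> (\<lambda>x. indicator {0..1} x *\<^sub>R f x) \<in> borel_measurable lborel
            \<and> set_integrable lborel {0..1} (\<lambda>x. (cmod (f x))^2)"

definition ip :: "(real \<Rightarrow> complex) \<Rightarrow> (real \<Rightarrow> complex) \<Rightarrow> complex" where
  "ip f g = (LINT x:{0..1}|lborel. f x * cnj (g x))"

text \<open>psi in W_2^1(0,1) with (weak) derivative dpsi: psi is the (absolutely continuous)
  primitive of an L_2 function dpsi on [0,1].\<close>
definition W21 :: "(real \<Rightarrow> complex) \<Rightarrow> (real \<Rightarrow> complex) \<Rightarrow> bool" where
  "W21 psi dpsi \<longleftrightarrow> L2 dpsi \<and>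
     (\<forall>x\<in>{0..1}. psi x = psi 0 + (LINT t:{0..x}|lborel. dpsi t))"

definition domA :: "(real \<Rightarrow> complex) \<Rightarrow> (real \<Rightarrow> complex) \<Rightarrow> real
                     \<Rightarrow> (real \<Rightarrow> complex) \<Rightarrow> (real \<Rightarrow> complex) \<Rightarrow> bool" where
  "domA v1 v2 \<alpha> psi dpsi \<longleftrightarrow> W21 psi dpsi \<and>
     psi 1 + \<i> * ip psi v2 = exp (\<i> * complex_of_real \<alpha>) * (psi 0 - \<i> * ip psi v1)"

definition opA :: "(real \<Rightarrow> complex) \<Rightarrow> (real \<Rightarrow> complex)
                     \<Rightarrow> (real \<Rightarrow> complex) \<Rightarrow> (real \<Rightarrow> complex) \<Rightarrow> real \<Rightarrow> complex" where
  "opA v1 v2 psi dpsi x = \<i> * dpsi x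
      + v1 x * (psi 0 - (\<i> / 2) * ip psi v1)
      + v2 x * (psi 1 + (\<i> / 2) * ip psi v2)"

end

theory Submission
  imports Defs
begin

lemma borel_measurable_cnj[measurable]:
  "f \<in> borel_measurable M \<Longrightarrow> (\<lambda>x. cnj (f x)) \<in> borel_measurable M"
  by (rule borel_measurable_continuous_on[of cnj]) (auto intro: continuous_on_cnj continuous_on_id)

lemma ab_le_sq: assumes "(a::real) \<ge> 0" "b \<ge> 0" shows "a * b \<le> a^2 + b^2"
proof -
  have "0 \<le> (a - b)^2" by simp
  hence "2*a*b \<le> a^2+b^2" by (simp add: power2_eq_square algebra_simps)
  moreover have "0 \<le> a*b" using assms by simp
  ultimately show ?thesis by linarith
qed

lemma L2_meas: "L2 f \<Longrightarrow> (\<lambda>x. indicator {0..1} x *\<^sub>R f x) \<in> borel_measurable lborel"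
  by (simp add: L2_def)

lemma L2_sq: "L2 f \<Longrightarrow> set_integrable lborel {0..1::real} (\<lambda>x. (cmod (f x))^2)"
  by (simp add: L2_def)

lemma si_const: "set_integrable lborel {a..b::real} (\<lambda>x. c::'a::{banach, second_countable_topology})"
  by (intro borel_integrable_atLeastAtMost' continuous_on_const)

lemma L2_int: assumes "L2 f" shows "set_integrable lborel {0..1} f"
proof (rule set_integrable_bound)
  show "set_integrable lborel {0..1} (\<lambda>x. 1 + (cmod (f x))^2)"
    using L2_sq[OF assms] si_const[of 0 1 "1::real"] by (intro set_integral_add(1)) auto
  show "set_borel_measurable lborel {0..1} f"
    using L2_meas[OF assms] by (simp add: set_borel_measurable_def)
  show "AE x in lborel. x \<in> {0..1} \<longrightarrow> norm (f x) \<le> norm (1 + (cmod (f x))\<^sup>2)"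
  proof (intro AE_I2 impI)
    fix x have "cmod (f x) \<le> 1 + (cmod (f x))^2"
      using ab_le_sq[of "cmod (f x)" 1] by simp
    then show "norm (f x) \<le> norm (1 + (cmod (f x))\<^sup>2)" by simp
  qed
qed

lemma L2_prod: assumes "L2 f" "L2 g" shows "set_integrable lborel {0..1} (\<lambda>x. f x * cnj (g x))"
proof (rule set_integrable_bound)
  show "set_integrable lborel {0..1} (\<lambda>x. (cmod (f x))^2 + (cmod (g x))^2)"
    using L2_sq[OF assms(1)] L2_sq[OF assms(2)] by (intro set_integral_add(1)) auto
  have "(\<lambda>x. indicator {0..1} x *\<^sub>R (f x * cnj (g x))) = (\<lambda>x. (indicator {0..1} x *\<^sub>R f x) * cnj (indicator {0..1} x *\<^sub>R g x))"
    by (auto simp: indicator_def)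
  also have "\<dots> \<in> borel_measurable lborel" using L2_meas[OF assms(1)] L2_meas[OF assms(2)] by measurable
  finally show "set_borel_measurable lborel {0..1} (\<lambda>x. f x * cnj (g x))"
    by (simp add: set_borel_measurable_def)
  show "AE x in lborel. x \<in> {0..1} \<longrightarrow> norm (f x * cnj (g x)) \<le> norm ((cmod (f x))^2 + (cmod (g x))^2)"
  proof (intro AE_I2 impI)
    fix x have "cmod (f x) * cmod (g x) \<le> (cmod (f x))^2 + (cmod (g x))^2"
      by (rule ab_le_sq) auto
    then show "norm (f x * cnj (g x)) \<le> norm ((cmod (f x))^2 + (cmod (g x))^2)" by (simp add: norm_mult)
  qed
qed

lemma prod_int:
  fixes A B :: "real \<Rightarrow> complex"
  assumes iA: "integrable lborel A" and iB: "integrable lborel B"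
  shows "integrable (lborel \<Otimes>\<^sub>M lborel) (\<lambda>(x,t). A x * B t)"
proof (rule lborel_pair.Fubini_integrable)
  have [measurable]: "A \<in> borel_measurable lborel" "B \<in> borel_measurable lborel" using assms by auto
  show "(\<lambda>(x,t). A x * B t) \<in> borel_measurable (lborel \<Otimes>\<^sub>M lborel)" by measurable
  have "integrable lborel (\<lambda>x. norm (A x) * (\<integral>t. norm (B t) \<partial>lborel))"
    using iA by (intro integrable_mult_left integrable_norm)
  moreover have "(\<lambda>x. \<integral>t. norm (case (x, t) of (x, t) \<Rightarrow> A x * B t) \<partial>lborel) = (\<lambda>x. norm (A x) * (\<integral>t. norm (B t) \<partial>lborel))"
    by (simp add: norm_mult)
  ultimately show "integrable lborel (\<lambda>x. \<integral>t. norm (case (x, t) of (x, t) \<Rightarrow> A x * B t) \<partial>lborel)"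
    by simp
  show "AE x in lborel. integrable lborel (\<lambda>t. case (x, t) of (x, t) \<Rightarrow> A x * B t)"
    using iB by (intro AE_I2) simp
qed

lemma le_set_meas: "{p \<in> space (lborel \<Otimes>\<^sub>M lborel). snd p \<le> (fst p::real)} \<in> sets (lborel \<Otimes>\<^sub>M lborel)"
proof -
  have "closed {p::real\<times>real. snd p \<le> fst p}"
    by (intro closed_Collect_le continuous_on_fst continuous_on_snd continuous_on_id)
  then show ?thesis unfolding lborel_prod by simp
qed
lemma less_set_meas: "{p \<in> space (lborel \<Otimes>\<^sub>M lborel). fst p < (snd p::real)} \<in> sets (lborel \<Otimes>\<^sub>M lborel)"
proof -
  have "open {p::real\<times>real. fst p < snd p}"
    by (intro open_Collect_less continuous_on_fst continuous_on_snd continuous_on_id)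
  then show ?thesis unfolding lborel_prod by simp
qed
lemma t1:
  fixes A B :: "real \<Rightarrow> complex"
  assumes mA: "A \<in> borel_measurable lborel" and mB: "B \<in> borel_measurable lborel"
  shows "(\<lambda>p. if snd p \<le> fst p then A (fst p) * cnj (B (snd p)) else 0) \<in> borel_measurable (lborel \<Otimes>\<^sub>M lborel)"
proof (rule measurable_If)
  have [measurable]: "A \<in> borel_measurable borel" "B \<in> borel_measurable borel" using mA mB by auto
  show "(\<lambda>p. A (fst p) * cnj (B (snd p))) \<in> borel_measurable (lborel \<Otimes>\<^sub>M lborel)"
    by measurable
  show "(\<lambda>p. 0) \<in> borel_measurable (lborel \<Otimes>\<^sub>M lborel)" by simp
  show "{p \<in> space (lborel \<Otimes>\<^sub>M lborel). snd p \<le> (fst p::real)} \<in> sets (lborel \<Otimes>\<^sub>M lborel)"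
    by (rule le_set_meas)
qed

lemma t2:
  fixes A B :: "real \<Rightarrow> complex"
  assumes mA: "A \<in> borel_measurable lborel" and mB: "B \<in> borel_measurable lborel"
  shows "(\<lambda>p. if fst p < snd p then A (fst p) * cnj (B (snd p)) else 0) \<in> borel_measurable (lborel \<Otimes>\<^sub>M lborel)"
proof (rule measurable_If)
  have [measurable]: "A \<in> borel_measurable borel" "B \<in> borel_measurable borel" using mA mB by auto
  show "(\<lambda>p. A (fst p) * cnj (B (snd p))) \<in> borel_measurable (lborel \<Otimes>\<^sub>M lborel)"
    by measurable
  show "(\<lambda>p. 0) \<in> borel_measurable (lborel \<Otimes>\<^sub>M lborel)" by simp
  show "{p \<in> space (lborel \<Otimes>\<^sub>M lborel). fst p < (snd p::real)} \<in> sets (lborel \<Otimes>\<^sub>M lborel)"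
    by (rule less_set_meas)
qed

lemma rep_W21:
  assumes "W21 psi a" "x \<in> {0..1}"
  shows "psi x = psi 0 + lebesgue_integral lborel (\<lambda>t. if t \<le> x then indicator {0..1} t *\<^sub>R a t else 0)"
proof -
  have "psi x = psi 0 + (LINT t:{0..x}|lborel. a t)" using assms unfolding W21_def by blast
  also have "(LINT t:{0..x}|lborel. a t) = lebesgue_integral lborel (\<lambda>t. if t \<le> x then indicator {0..1} t *\<^sub>R a t else 0)"
    unfolding set_lebesgue_integral_def using assms(2)
    by (intro Bochner_Integration.integral_cong) (auto simp: indicator_def)
  finally show ?thesis .
qed

lemma alg1: fixes X1 X2 IA IB p0 q0 :: complex
  assumes "X1 + X2 = IA * cnj IB"
  shows "(IA * cnj p0 + X1) + (q0 * cnj IB + X2) = (q0 + IA) * cnj (p0 + IB) - q0 * cnj p0"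
proof -
  have "(IA * cnj p0 + X1) + (q0 * cnj IB + X2) = IA * cnj p0 + q0 * cnj IB + (X1 + X2)" by (simp add: algebra_simps)
  also have "\<dots> = IA * cnj p0 + q0 * cnj IB + IA * cnj IB" using assms by simp
  also have "\<dots> = (q0 + IA) * cnj (p0 + IB) - q0 * cnj p0" by (simp add: algebra_simps)
  finally show ?thesis .
qed

lemma ibp:
  assumes W1: "W21 psi a" and W2: "W21 phi b"
  shows "ip a phi + ip psi b = psi 1 * cnj (phi 1) - psi 0 * cnj (phi 0)"
proof -
  define A where "A = (\<lambda>x::real. indicator {0..1} x *\<^sub>R a x)"
  define B where "B = (\<lambda>x::real. indicator {0..1} x *\<^sub>R b x)"
  have La: "L2 a" and Lb: "L2 b" using W1 W2 unfolding W21_def by blast+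
  have iA: "integrable lborel A" and iB: "integrable lborel B"
    using L2_int[OF La] L2_int[OF Lb] by (auto simp: A_def B_def set_integrable_def)
  have mA[measurable]: "A \<in> borel_measurable lborel" and mB[measurable]: "B \<in> borel_measurable lborel"
    using iA iB by auto
  define G where "G x t = A x * cnj (B t)" for x t
  define F1 where "F1 x t = (if t \<le> x then G x t else 0)" for x t
  define F2 where "F2 x t = (if x < t then G x t else 0)" for x t
  have iG: "integrable (lborel \<Otimes>\<^sub>M lborel) (\<lambda>(x,t). G x t)"
    unfolding G_def by (rule prod_int[OF iA]) (use iB in simp)
  have iF1: "integrable (lborel \<Otimes>\<^sub>M lborel) (\<lambda>(x,t). F1 x t)"
  proof (rule Bochner_Integration.integrable_bound[OF iG])
    have "(\<lambda>(x,t). F1 x t) = (\<lambda>p. if snd p \<le> fst p then A (fst p) * cnj (B (snd p)) else 0)"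
      by (auto simp: F1_def G_def fun_eq_iff)
    then show "(\<lambda>(x,t). F1 x t) \<in> borel_measurable (lborel \<Otimes>\<^sub>M lborel)"
      using t1[OF mA mB] by simp
    show "AE p in lborel \<Otimes>\<^sub>M lborel. norm ((\<lambda>(x,t). F1 x t) p) \<le> norm ((\<lambda>(x,t). G x t) p)"
      by (intro AE_I2) (simp add: F1_def split: prod.splits)
  qed
  have iF2: "integrable (lborel \<Otimes>\<^sub>M lborel) (\<lambda>(x,t). F2 x t)"
  proof (rule Bochner_Integration.integrable_bound[OF iG])
    have "(\<lambda>(x,t). F2 x t) = (\<lambda>p. if fst p < snd p then A (fst p) * cnj (B (snd p)) else 0)"
      by (auto simp: F2_def G_def fun_eq_iff)
    then show "(\<lambda>(x,t). F2 x t) \<in> borel_measurable (lborel \<Otimes>\<^sub>M lborel)"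
      using t2[OF mA mB] by simp
    show "AE p in lborel \<Otimes>\<^sub>M lborel. norm ((\<lambda>(x,t). F2 x t) p) \<le> norm ((\<lambda>(x,t). G x t) p)"
      by (intro AE_I2) (simp add: F2_def split: prod.splits)
  qed
  have "(\<lambda>t. if t \<le> 1 then indicator {0..1} t *\<^sub>R a t else 0) = A"
    by (auto simp: A_def indicator_def fun_eq_iff)
  then have psi1: "psi 1 = psi 0 + lebesgue_integral lborel A"
    using rep_W21[OF W1, of 1] by simp
  have "(\<lambda>t. if t \<le> 1 then indicator {0..1} t *\<^sub>R b t else 0) = B"
    by (auto simp: B_def indicator_def fun_eq_iff)
  then have phi1: "phi 1 = phi 0 + lebesgue_integral lborel B"
    using rep_W21[OF W2, of 1] by simp
  have e1: "A x * cnj (phi x) = A x * cnj (phi 0) + lebesgue_integral lborel (\<lambda>t. F1 x t)" for x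
  proof (cases "x \<in> {0..1}")
    case True
    have "cnj (phi x) = cnj (phi 0) + cnj (lebesgue_integral lborel (\<lambda>t. if t \<le> x then B t else 0))"
      using rep_W21[OF W2 True] unfolding B_def by simp
    also have "cnj (lebesgue_integral lborel (\<lambda>t. if t \<le> x then B t else 0)) = lebesgue_integral lborel (\<lambda>t. cnj (if t \<le> x then B t else 0))"
      by (rule Bochner_Integration.integral_cnj[symmetric])
    finally have "A x * cnj (phi x) = A x * cnj (phi 0) + A x * lebesgue_integral lborel (\<lambda>t. cnj (if t \<le> x then B t else 0))"
      by (simp add: distrib_left)
    also have "A x * lebesgue_integral lborel (\<lambda>t. cnj (if t \<le> x then B t else 0)) = lebesgue_integral lborel (\<lambda>t. A x * cnj (if t \<le> x then B t else 0))"
      by (rule integral_mult_right_zero[symmetric])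
    also have "(\<lambda>t. A x * cnj (if t \<le> x then B t else 0)) = (\<lambda>t. F1 x t)"
      by (auto simp: F1_def G_def fun_eq_iff)
    finally show ?thesis .
  next
    case False
    then have "\<And>t. G x t = 0" unfolding G_def A_def by simp
    moreover have "A x = 0" using False unfolding A_def by simp
    ultimately show ?thesis by (simp add: F1_def cong: if_cong)
  qed
  have "ip a phi = lebesgue_integral lborel (\<lambda>x. A x * cnj (phi x))"
    unfolding ip_def set_lebesgue_integral_def A_def by simp
  also have "\<dots> = lebesgue_integral lborel (\<lambda>x. A x * cnj (phi 0) + lebesgue_integral lborel (\<lambda>t. F1 x t))"
    by (simp add: e1)
  also have "\<dots> = lebesgue_integral lborel A * cnj (phi 0) + lebesgue_integral lborel (\<lambda>x. lebesgue_integral lborel (\<lambda>t. F1 x t))"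
    using iA lborel_pair.integrable_fst[OF iF1] by simp
  finally have ip1: "ip a phi = lebesgue_integral lborel A * cnj (phi 0) + lebesgue_integral lborel (\<lambda>x. lebesgue_integral lborel (\<lambda>t. F1 x t))" .
  have e2: "psi t * cnj (B t) = psi 0 * cnj (B t) + lebesgue_integral lborel (\<lambda>x. F2 x t)" for t
  proof (cases "t \<in> {0..1}")
    case True
    have "AE x in lborel. (if x \<le> t then A x else 0) = (if x < t then A x else 0)"
      using AE_lborel_singleton[of t] by eventually_elim auto
    then have "lebesgue_integral lborel (\<lambda>x. if x \<le> t then A x else 0) = lebesgue_integral lborel (\<lambda>x. if x < t then A x else 0)"
      by (rule integral_cong_AE[rotated 2]) auto
    then have "psi t = psi 0 + lebesgue_integral lborel (\<lambda>x. if x < t then A x else 0)"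
      using rep_W21[OF W1 True] unfolding A_def by simp
    then have "psi t * cnj (B t) = psi 0 * cnj (B t) + lebesgue_integral lborel (\<lambda>x. if x < t then A x else 0) * cnj (B t)"
      by (simp add: distrib_right)
    also have "lebesgue_integral lborel (\<lambda>x. if x < t then A x else 0) * cnj (B t) = lebesgue_integral lborel (\<lambda>x. (if x < t then A x else 0) * cnj (B t))"
      by (rule integral_mult_left_zero[symmetric])
    also have "(\<lambda>x. (if x < t then A x else 0) * cnj (B t)) = (\<lambda>x. F2 x t)"
      by (auto simp: F2_def G_def fun_eq_iff)
    finally show ?thesis .
  next
    case False
    then have "\<And>x. G x t = 0" unfolding G_def B_def by simp
    moreover have "B t = 0" using False unfolding B_def by simp
    ultimately show ?thesis by (simp add: F2_def cong: if_cong)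
  qed
  have "ip psi b = lebesgue_integral lborel (\<lambda>t. psi t * cnj (B t))"
    unfolding ip_def set_lebesgue_integral_def B_def by (intro Bochner_Integration.integral_cong) (auto simp: indicator_def)
  also have "\<dots> = lebesgue_integral lborel (\<lambda>t. psi 0 * cnj (B t) + lebesgue_integral lborel (\<lambda>x. F2 x t))"
    by (simp add: e2)
  also have "\<dots> = psi 0 * cnj (lebesgue_integral lborel B) + lebesgue_integral lborel (\<lambda>t. lebesgue_integral lborel (\<lambda>x. F2 x t))"
    using iB lborel_pair.integrable_snd[OF iF2] by simp
  also have "lebesgue_integral lborel (\<lambda>t. lebesgue_integral lborel (\<lambda>x. F2 x t)) = lebesgue_integral lborel (\<lambda>x. lebesgue_integral lborel (\<lambda>t. F2 x t))"
    by (rule lborel_pair.Fubini_integral[OF iF2])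
  finally have ip2: "ip psi b = psi 0 * cnj (lebesgue_integral lborel B) + lebesgue_integral lborel (\<lambda>x. lebesgue_integral lborel (\<lambda>t. F2 x t))" .
  have "lebesgue_integral lborel (\<lambda>x. lebesgue_integral lborel (\<lambda>t. F1 x t)) + lebesgue_integral lborel (\<lambda>x. lebesgue_integral lborel (\<lambda>t. F2 x t))
      = lebesgue_integral lborel (\<lambda>x. lebesgue_integral lborel (\<lambda>t. F1 x t) + lebesgue_integral lborel (\<lambda>t. F2 x t))"
    using lborel_pair.integrable_fst[OF iF1] lborel_pair.integrable_fst[OF iF2] by simp
  also have "\<dots> = lebesgue_integral lborel (\<lambda>x. A x * cnj (lebesgue_integral lborel B))"
  proof (intro Bochner_Integration.integral_cong refl)
    fix x
    have "integrable lborel (\<lambda>t. indicator {..x} t *\<^sub>R G x t)" unfolding G_def using iB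
      by (intro integrable_mult_indicator) auto
    moreover have "(\<lambda>t. indicator {..x} t *\<^sub>R G x t) = (\<lambda>t. F1 x t)"
      by (auto simp: F1_def indicator_def fun_eq_iff)
    ultimately have i1: "integrable lborel (\<lambda>t. F1 x t)" by simp
    have "integrable lborel (\<lambda>t. indicator {x<..} t *\<^sub>R G x t)" unfolding G_def using iB
      by (intro integrable_mult_indicator) auto
    moreover have "(\<lambda>t. indicator {x<..} t *\<^sub>R G x t) = (\<lambda>t. F2 x t)"
      by (auto simp: F2_def indicator_def fun_eq_iff)
    ultimately have i2: "integrable lborel (\<lambda>t. F2 x t)" by simp
    have "lebesgue_integral lborel (\<lambda>t. F1 x t) + lebesgue_integral lborel (\<lambda>t. F2 x t) = lebesgue_integral lborel (\<lambda>t. F1 x t + F2 x t)"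
      using i1 i2 by simp
    also have "(\<lambda>t. F1 x t + F2 x t) = (\<lambda>t. G x t)" by (auto simp: F1_def F2_def)
    finally show "lebesgue_integral lborel (\<lambda>t. F1 x t) + lebesgue_integral lborel (\<lambda>t. F2 x t) = A x * cnj (lebesgue_integral lborel B)"
      by (simp add: G_def)
  qed
  also have "\<dots> = lebesgue_integral lborel A * cnj (lebesgue_integral lborel B)" by simp
  finally have sum: "lebesgue_integral lborel (\<lambda>x. lebesgue_integral lborel (\<lambda>t. F1 x t)) + lebesgue_integral lborel (\<lambda>x. lebesgue_integral lborel (\<lambda>t. F2 x t))
      = lebesgue_integral lborel A * cnj (lebesgue_integral lborel B)" .
  show ?thesis
    unfolding ip1 ip2 psi1 phi1
    by (rule alg1[OF sum])
qed

lemma alg2: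
  fixes P0 P1 F0c F1c p1 p2 q1c q2c E Ec :: complex
  assumes h1: "P1 + \<i> * p2 = E * (P0 - \<i> * p1)"
    and h2: "F1c - \<i> * q2c = Ec * (F0c + \<i> * q1c)"
    and hE: "E * Ec = 1"
  shows "(P0 - \<i>/2 * p1) * q1c + (P1 + \<i>/2 * p2) * q2c = - \<i> * (P1 * F1c - P0 * F0c) + (F0c + \<i>/2 * q1c) * p1 + (F1c - \<i>/2 * q2c) * p2"
proof -
  have P1: "P1 = E * (P0 - \<i> * p1) - \<i> * p2" using h1 by (simp add: algebra_simps)
  have F1: "F1c = Ec * (F0c + \<i> * q1c) + \<i> * q2c" using h2 by (simp add: algebra_simps)
  have "(P0 - \<i>/2 * p1) * q1c + (P1 + \<i>/2 * p2) * q2c - (- \<i> * (P1 * F1c - P0 * F0c) + (F0c + \<i>/2 * q1c) * p1 + (F1c - \<i>/2 * q2c) * p2)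
     = \<i> * (E * Ec - 1) * (P0 - \<i> * p1) * (F0c + \<i> * q1c)"
    unfolding P1 F1 by (simp add: algebra_simps power2_eq_square)
  then show ?thesis using hE by simp
qed

lemma cont_L2:
  assumes "continuous_on {0..1} f"
  shows "L2 f"
  unfolding L2_def
proof
  show "(\<lambda>x. indicator {0..1} x *\<^sub>R f x) \<in> borel_measurable lborel"
    using borel_measurable_continuous_on_indicator[OF _ assms] by simp
  show "set_integrable lborel {0..1} (\<lambda>x. (cmod (f x))\<^sup>2)"
    by (intro borel_integrable_atLeastAtMost' continuous_intros assms)
qed

lemma W21_cont:
  assumes "W21 psi a"
  shows "continuous_on {0..1} psi"
proof -
  have La: "L2 a" using assms unfolding W21_def by blast
  have si: "set_integrable lborel {0..1} a" by (rule L2_int[OF La])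
  have ion: "a integrable_on {0..1}" using set_borel_integral_eq_integral(1)[OF si] .
  have c: "continuous_on {0..1} (\<lambda>x. psi 0 + integral {0..x} a)"
    by (intro continuous_intros indefinite_integral_continuous_1 ion)
  have "psi x = psi 0 + integral {0..x} a" if "x \<in> {0..1}" for x
  proof -
    have "psi x = psi 0 + (LINT t:{0..x}|lborel. a t)" using assms that unfolding W21_def by blast
    also have "(LINT t:{0..x}|lborel. a t) = integral {0..x} a"
      by (rule set_borel_integral_eq_integral(2)[OF set_integrable_subset[OF si]]) (use that in auto)
    finally show ?thesis .
  qed
  then show ?thesis using continuous_on_cong[OF refl, of "{0..1}" psi] c by metis
qed

lemma W21_L2: "W21 psi a \<Longrightarrow> L2 psi"
  by (rule cont_L2[OF W21_cont])

lemma ip_cnj: "ip f g = cnj (ip g f)"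
proof -
  have "cnj (ip g f) = lebesgue_integral lborel (\<lambda>x. cnj (indicator {0..1} x *\<^sub>R (g x * cnj (f x))))"
    unfolding ip_def set_lebesgue_integral_def by (rule Bochner_Integration.integral_cnj[symmetric])
  also have "\<dots> = ip f g"
    unfolding ip_def set_lebesgue_integral_def by (intro Bochner_Integration.integral_cong) auto
  finally show ?thesis by simp
qed

lemma ip_left3:
  assumes "L2 f" "L2 g" "L2 k" "L2 h"
  shows "ip (\<lambda>x. a * f x + g x * b + k x * c) h = a * ip f h + b * ip g h + c * ip k h"
proof -
  have i1: "set_integrable lborel {0..1} (\<lambda>x. a * (f x * cnj (h x)))" using L2_prod[OF assms(1,4)] by simp
  have i2: "set_integrable lborel {0..1} (\<lambda>x. b * (g x * cnj (h x)))" using L2_prod[OF assms(2,4)] by simp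
  have i3: "set_integrable lborel {0..1} (\<lambda>x. c * (k x * cnj (h x)))" using L2_prod[OF assms(3,4)] by simp
  have "ip (\<lambda>x. a * f x + g x * b + k x * c) h = (LINT x:{0..1}|lborel. a * (f x * cnj (h x)) + b * (g x * cnj (h x)) + c * (k x * cnj (h x)))"
    unfolding ip_def by (simp add: algebra_simps)
  also have "\<dots> = (LINT x:{0..1}|lborel. a * (f x * cnj (h x))) + (LINT x:{0..1}|lborel. b * (g x * cnj (h x))) + (LINT x:{0..1}|lborel. c * (k x * cnj (h x)))"
    using i1 i2 i3 by (simp add: set_integral_add)
  also have "\<dots> = a * ip f h + b * ip g h + c * ip k h"
    unfolding ip_def by simp
  finally show ?thesis .
qed

lemma ip_right3:
  assumes "L2 f" "L2 g" "L2 k" "L2 h"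
  shows "ip h (\<lambda>x. a * f x + g x * b + k x * c) = cnj a * ip h f + cnj b * ip h g + cnj c * ip h k"
proof -
  have "ip h (\<lambda>x. a * f x + g x * b + k x * c) = cnj (ip (\<lambda>x. a * f x + g x * b + k x * c) h)"
    by (rule ip_cnj)
  also have "\<dots> = cnj (a * ip f h + b * ip g h + c * ip k h)" using ip_left3[OF assms] by simp
  also have "\<dots> = cnj a * ip h f + cnj b * ip h g + cnj c * ip h k"
    by (simp add: ip_cnj[of h])
  finally show ?thesis .
qed

lemma symm:
  assumes L1: "L2 v1" and L2': "L2 v2" and abs1: "exp (\<i> * complex_of_real \<alpha>) * cnj (exp (\<i> * complex_of_real \<alpha>)) = 1"
    and D1: "domA v1 v2 \<alpha> psi dpsi" and D2: "domA v1 v2 \<alpha> phi dphi"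
  shows "ip (opA v1 v2 psi dpsi) phi = ip psi (opA v1 v2 phi dphi)"
proof -
  define E where "E = exp (\<i> * complex_of_real \<alpha>)"
  have W1: "W21 psi dpsi" and W2: "W21 phi dphi" using D1 D2 unfolding domA_def by blast+
  have c1: "psi 1 + \<i> * ip psi v2 = E * (psi 0 - \<i> * ip psi v1)" using D1 unfolding domA_def E_def by blast
  have c2: "phi 1 + \<i> * ip phi v2 = E * (phi 0 - \<i> * ip phi v1)" using D2 unfolding domA_def E_def by blast
  have c2': "cnj (phi 1) - \<i> * cnj (ip phi v2) = cnj E * (cnj (phi 0) + \<i> * cnj (ip phi v1))"
    using arg_cong[OF c2, of cnj] by simp
  have Ldpsi: "L2 dpsi" and Ldphi: "L2 dphi" using W1 W2 unfolding W21_def by blast+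
  have Lpsi: "L2 psi" and Lphi: "L2 phi" using W21_L2[OF W1] W21_L2[OF W2] .
  have lhs: "ip (opA v1 v2 psi dpsi) phi = \<i> * ip dpsi phi + (psi 0 - (\<i> / 2) * ip psi v1) * ip v1 phi + (psi 1 + (\<i> / 2) * ip psi v2) * ip v2 phi"
    unfolding opA_def[abs_def] by (rule ip_left3[OF Ldpsi L1 L2' Lphi])
  have rhs: "ip psi (opA v1 v2 phi dphi) = cnj \<i> * ip psi dphi + cnj (phi 0 - (\<i> / 2) * ip phi v1) * ip psi v1 + cnj (phi 1 + (\<i> / 2) * ip phi v2) * ip psi v2"
    unfolding opA_def[abs_def] by (rule ip_right3[OF Ldphi L1 L2' Lpsi])
  have ibp': "ip psi dphi = psi 1 * cnj (phi 1) - psi 0 * cnj (phi 0) - ip dpsi phi"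
    using ibp[OF W1 W2] by (simp add: algebra_simps)
  have key: "(psi 0 - \<i>/2 * ip psi v1) * cnj (ip phi v1) + (psi 1 + \<i>/2 * ip psi v2) * cnj (ip phi v2)
     = - \<i> * (psi 1 * cnj (phi 1) - psi 0 * cnj (phi 0)) + (cnj (phi 0) + \<i>/2 * cnj (ip phi v1)) * ip psi v1 + (cnj (phi 1) - \<i>/2 * cnj (ip phi v2)) * ip psi v2"
    by (rule alg2[OF c1 c2']) (use abs1 in \<open>simp add: E_def\<close>)
  show ?thesis
    unfolding lhs rhs ibp' ip_cnj[of v1 phi] ip_cnj[of v2 phi]
    using key by (simp add: algebra_simps)
qed

lemma bdd_L2:
  assumes m: "(\<lambda>x. indicator {0..1} x *\<^sub>R f x) \<in> borel_measurable lborel"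
    and b: "\<And>x. x \<in> {0..1} \<Longrightarrow> cmod (f x) \<le> C"
  shows "L2 f"
  unfolding L2_def
proof
  show "(\<lambda>x. indicator {0..1} x *\<^sub>R f x) \<in> borel_measurable lborel" by (rule m)
  show "set_integrable lborel {0..1} (\<lambda>x. (cmod (f x))\<^sup>2)"
  proof (rule set_integrable_bound)
    show "set_integrable lborel {0..1} (\<lambda>x::real. C^2)" by (rule si_const)
    have "(\<lambda>x::real. indicator {0..1} x *\<^sub>R (cmod (f x))\<^sup>2) = (\<lambda>x::real. (cmod (indicator {0..1} x *\<^sub>R f x))\<^sup>2)"
      by (auto simp: indicator_def fun_eq_iff)
    also have "\<dots> \<in> borel_measurable lborel" using m by measurable
    finally show "set_borel_measurable lborel {0..1} (\<lambda>x. (cmod (f x))\<^sup>2)"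
      by (simp add: set_borel_measurable_def)
    show "AE x in lborel. x \<in> {0..1} \<longrightarrow> norm ((cmod (f x))\<^sup>2) \<le> norm (C^2)"
    proof (intro AE_I2 impI)
      fix x :: real assume "x \<in> {0..1}"
      then have "cmod (f x) \<le> C" by (rule b)
      then have "(cmod (f x))^2 \<le> C^2" by (intro power_mono) auto
      then show "norm ((cmod (f x))\<^sup>2) \<le> norm (C^2)" by simp
    qed
  qed
qed

locale bddfun =
  fixes g :: "real \<Rightarrow> complex" and M :: real
  assumes gm[measurable]: "g \<in> borel_measurable borel"
    and gb: "\<And>x. cmod (g x) \<le> M"
    and gz: "\<And>x. x \<notin> {0..1} \<Longrightarrow> g x = 0"
begin

lemma M_nonneg: "0 \<le> M" using gb[of 0] norm_ge_zero[of "g 0"] by linarith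

lemma g_int: "integrable lborel g"
proof (rule Bochner_Integration.integrable_bound)
  show "integrable lborel (\<lambda>x::real. indicator {0..1} x *\<^sub>R M)"
    by (rule si_const[of 0 1 M, unfolded set_integrable_def])
  show "g \<in> borel_measurable lborel" by simp
  show "AE x in lborel. norm (g x) \<le> norm (indicator {0..1} x *\<^sub>R M)"
  proof (intro AE_I2)
    fix x show "norm (g x) \<le> norm (indicator {0..1} x *\<^sub>R M)"
      using gb[of x] gz[of x] M_nonneg by (cases "x \<in> {0..1}") auto
  qed
qed

lemma g_ion: "g integrable_on {a..b}"
  using integrable_on_subcbox[OF integrable_on_lborel[OF g_int], of a b] by simp

definition S :: "real \<Rightarrow> real \<Rightarrow> complex" where
  "S h x = integral {x..x+h} g /\<^sub>R h"

definition dS :: "real \<Rightarrow> real \<Rightarrow> complex" where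
  "dS h t = (g (h + t) - g t) /\<^sub>R h"

lemma S_bound: assumes "h > 0" shows "cmod (S h x) \<le> M"
proof -
  have "g integrable_on cbox x (x+h)" using g_ion by simp
  from integrable_bound[OF M_nonneg this] gb
  have "norm (integral {x..x+h} g) \<le> M * h" using assms by simp
  then show ?thesis using assms unfolding S_def by (simp add: field_simps)
qed

lemma dS_L2: assumes "h > 0" shows "L2 (dS h)"
proof (rule bdd_L2)
  show "(\<lambda>x. indicator {0..1} x *\<^sub>R dS h x) \<in> borel_measurable lborel"
    unfolding dS_def by measurable
  fix x
  have "cmod (g (h + x) - g x) \<le> M + M"
    using norm_triangle_ineq4[of "g (h+x)" "g x"] gb[of "h+x"] gb[of x] by linarith
  moreover have "cmod (dS h x) = cmod (g (h + x) - g x) / h"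
  proof -
    have "cmod (dS h x) = cmod (inverse h *\<^sub>R (g (h + x) - g x))" unfolding dS_def by (rule refl)
    also have "\<dots> = inverse h * cmod (g (h + x) - g x)" using assms by (simp only: norm_scaleR) simp
    finally show ?thesis by (simp add: divide_inverse_commute)
  qed
  ultimately show "cmod (dS h x) \<le> (M + M) / h"
    using assms by (simp add: divide_right_mono)
qed

lemma S_W21: assumes h: "h > 0" shows "W21 (S h) (dS h)"
  unfolding W21_def
proof (intro conjI ballI)
  show "L2 (dS h)" by (rule dS_L2[OF h])
  fix x :: real assume x: "x \<in> {0..1}"
  have si: "set_integrable lborel {0..x} (dS h)"
    by (rule set_integrable_subset[OF L2_int[OF dS_L2[OF h]]]) (use x in auto)
  have "(LINT t:{0..x}|lborel. dS h t) = integral {0..x} (dS h)"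
    by (rule set_borel_integral_eq_integral(2)[OF si])
  also have "\<dots> = (integral {0..x} (g \<circ> (+) h) - integral {0..x} g) /\<^sub>R h"
  proof -
    have i1: "(g \<circ> (+) h) integrable_on {0..x}"
      using integrable_on_shift_Icc_real[of g h 0 x] g_ion by simp
    have "integral {0..x} (dS h) = integral {0..x} (\<lambda>t. inverse h *\<^sub>R ((g \<circ> (+) h) t - g t))"
      unfolding dS_def by (simp add: o_def)
    also have "\<dots> = inverse h *\<^sub>R integral {0..x} (\<lambda>t. (g \<circ> (+) h) t - g t)"
      by (rule integral_cmul)
    also have "integral {0..x} (\<lambda>t. (g \<circ> (+) h) t - g t) = integral {0..x} (g \<circ> (+) h) - integral {0..x} g"
      by (rule integral_diff[OF i1 g_ion])
    finally show ?thesis by simp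
  qed
  also have "integral {0..x} (g \<circ> (+) h) = integral {h..x+h} g"
    using integral_shift_Icc_real[of 0 x g h] by simp
  also have "integral {h..x+h} g - integral {0..x} g = integral {x..x+h} g - integral {0..0+h} g"
  proof -
    have "integral {0..x} g + integral {x..x+h} g = integral {0..x+h} g"
      by (rule Henstock_Kurzweil_Integration.integral_combine) (use x h g_ion in auto)
    moreover have "integral {0..h} g + integral {h..x+h} g = integral {0..x+h} g"
      by (rule Henstock_Kurzweil_Integration.integral_combine) (use x h g_ion in auto)
    ultimately show ?thesis by (simp add: algebra_simps)
  qed
  finally have "(LINT t:{0..x}|lborel. dS h t) = S h x - S h 0"
    unfolding S_def by (simp add: scaleR_diff_right)
  then show "S h x = S h 0 + (LINT t:{0..x}|lborel. dS h t)" by simp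
qed

end

context bddfun begin

lemma S_meas: assumes "h > 0" shows "(\<lambda>x. indicator {0..1} x *\<^sub>R S h x) \<in> borel_measurable lborel"
  using borel_measurable_continuous_on_indicator[OF _ W21_cont[OF S_W21[OF assms]]] by simp

lemma S_lim:
  obtains N where "N \<in> null_sets lebesgue"
    "\<And>x. x \<notin> N \<Longrightarrow> (\<lambda>k. S (1 / (real k + 1)) x) \<longlonglongrightarrow> g x"
proof -
  have "\<And>a b. g integrable_on cbox a b" using g_ion by simp
  from integrable_ccontinuous_explicit[of g, OF this]
  obtain N where N: "negligible N"
    and H: "\<And>x e. \<lbrakk>x \<notin> N; 0 < e\<rbrakk> \<Longrightarrow> \<exists>d>0. \<forall>h. 0 < h \<and> h < d \<longrightarrow>
        norm (integral (cbox x (x + h *\<^sub>R One)) g /\<^sub>R h ^ DIM(real) - g x) < e"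
    by blast
  show ?thesis
  proof (rule that)
    show "N \<in> null_sets lebesgue" using N negligible_iff_null_sets by blast
    fix x assume x: "x \<notin> N"
    show "(\<lambda>k. S (1 / (real k + 1)) x) \<longlonglongrightarrow> g x"
      unfolding LIMSEQ_iff
    proof (intro allI impI)
      fix r :: real assume r: "0 < r"
      obtain d where d: "d > 0" and dH: "\<And>h. 0 < h \<Longrightarrow> h < d \<Longrightarrow> norm (S h x - g x) < r"
        using H[OF x r] unfolding S_def by auto
      obtain n0 :: nat where n0: "inverse d < real n0" using reals_Archimedean2 by blast
      show "\<exists>no. \<forall>n\<ge>no. norm (S (1 / (real n + 1)) x - g x) < r"
      proof (intro exI allI impI)
        fix n assume "n0 \<le> n"
        then have "inverse d < real n + 1" using n0 by linarith
        then have "1 / (real n + 1) < d" using d by (simp add: field_simps)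
        then show "norm (S (1 / (real n + 1)) x - g x) < r" by (intro dH) auto
      qed
    qed
  qed
qed

lemma S_approx:
  assumes e: "e > 0"
  shows "\<exists>h>0. (LINT x:{0..1}|lborel. (cmod (g x - S h x))^2) < e"
proof -
  obtain N where N: "N \<in> null_sets lebesgue"
    and lim: "\<And>x. x \<notin> N \<Longrightarrow> (\<lambda>k. S (1 / (real k + 1)) x) \<longlonglongrightarrow> g x"
    using S_lim by blast
  define s where "s k x = indicator {0..1} x *\<^sub>R (cmod (g x - S (1 / (real k + 1)) x))^2" for k x
  have hpos: "1 / (real k + 1) > 0" for k :: nat by simp
  have sm: "s k \<in> borel_measurable lborel" for k
  proof -
    have [measurable]: "(\<lambda>x. indicator {0..1} x *\<^sub>R S (1 / (real k + 1)) x) \<in> borel_measurable lborel"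
      by (rule S_meas[OF hpos])
    have "s k = (\<lambda>x. indicator {0..1} x *\<^sub>R (cmod (g x - indicator {0..1} x *\<^sub>R S (1 / (real k + 1)) x))^2)"
      by (auto simp: s_def indicator_def fun_eq_iff)
    also have "\<dots> \<in> borel_measurable lborel" by measurable
    finally show ?thesis .
  qed
  have m0: "(\<lambda>x. 0::real) \<in> borel_measurable lborel" by simp
    have iw: "integrable lborel (\<lambda>x::real. indicator {0..1} x *\<^sub>R (2*M)^2)"
      by (rule si_const[unfolded set_integrable_def])
    have "AE x in lebesgue. x \<notin> N" by (rule AE_not_in[OF N])
    then have "AE x in lborel. x \<notin> N" by (simp add: AE_completion_iff)
    then have lim0: "AE x in lborel. (\<lambda>k. s k x) \<longlonglongrightarrow> 0"
    proof eventually_elim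
      case (elim x)
      have "(\<lambda>k. indicator {0..1} x *\<^sub>R (cmod (g x - S (1 / (real k + 1)) x))^2) \<longlonglongrightarrow> indicator {0..1} x *\<^sub>R (cmod (g x - g x))^2"
        by (intro tendsto_intros lim[OF elim])
      then show ?case by (simp add: s_def)
    qed
    have bd: "AE x in lborel. norm (s k x) \<le> indicator {0..1} x *\<^sub>R (2*M)^2" for k
    proof (intro AE_I2)
      fix x
      have "cmod (g x - S (1 / (real k + 1)) x) \<le> cmod (g x) + cmod (S (1 / (real k + 1)) x)"
        by (rule norm_triangle_ineq4)
      also have "\<dots> \<le> 2*M" using gb[of x] S_bound[OF hpos, of k x] by linarith
      finally have "(cmod (g x - S (1 / (real k + 1)) x))^2 \<le> (2*M)^2" by (intro power_mono) auto
      then show "norm (s k x) \<le> indicator {0..1} x *\<^sub>R (2*M)^2"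
        by (simp add: s_def indicator_def)
    qed
  have "(\<lambda>k. lebesgue_integral lborel (s k)) \<longlonglongrightarrow> lebesgue_integral lborel (\<lambda>x. 0)"
    using [[show_types]] integral_dominated_convergence[OF m0 sm iw lim0 bd] by simp
  then have "(\<lambda>k. lebesgue_integral lborel (s k)) \<longlonglongrightarrow> 0" by simp
  from order_tendstoD(2)[OF this e] obtain k where "lebesgue_integral lborel (s k) < e"
    by (auto simp: eventually_sequentially)
  then show ?thesis using hpos[of k] unfolding s_def set_lebesgue_integral_def by blast
qed

end

lemma trunc:
  assumes Lf: "L2 f" and e: "e > 0"
  shows "\<exists>n::nat. (LINT x:{0..1}|lborel. (cmod (f x - (if cmod (indicator {0..1} x *\<^sub>R f x) \<le> real n then indicator {0..1} x *\<^sub>R f x else 0)))^2) < e"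
proof -
  define F where "F x = indicator {0..1} x *\<^sub>R f x" for x :: real
  have Fm[measurable]: "F \<in> borel_measurable lborel" using L2_meas[OF Lf] by (simp add: F_def[abs_def])
  define s where "s n x = (cmod (F x - (if cmod (F x) \<le> real n then F x else 0)))^2" for n :: nat and x
  have sm: "s n \<in> borel_measurable lborel" for n unfolding s_def[abs_def] by measurable
  have iw: "integrable lborel (\<lambda>x. indicator {0..1} x *\<^sub>R (cmod (f x))^2)"
    using L2_sq[OF Lf] by (simp add: set_integrable_def)
  have m0: "(\<lambda>x. 0::real) \<in> borel_measurable lborel" by simp
  have lim0: "AE x in lborel. (\<lambda>n. s n x) \<longlonglongrightarrow> 0"
  proof (intro AE_I2 tendsto_eventually)
    fix x
    obtain n0 :: nat where "cmod (F x) \<le> real n0" using real_arch_simple by blast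
    then have "\<forall>n\<ge>n0. s n x = 0" unfolding s_def
      by (auto intro: order_trans[of _ "real n0"])
    then show "\<forall>\<^sub>F n in sequentially. s n x = 0" by (auto simp: eventually_sequentially)
  qed
  have bd: "AE x in lborel. norm (s n x) \<le> indicator {0..1} x *\<^sub>R (cmod (f x))^2" for n
  proof (intro AE_I2)
    fix x
    have "norm (s n x) \<le> (cmod (F x))^2" unfolding s_def by auto
    also have "\<dots> = indicator {0..1} x *\<^sub>R (cmod (f x))^2" by (simp add: F_def indicator_def)
    finally show "norm (s n x) \<le> indicator {0..1} x *\<^sub>R (cmod (f x))^2" .
  qed
  have "(\<lambda>n. lebesgue_integral lborel (s n)) \<longlonglongrightarrow> lebesgue_integral lborel (\<lambda>x. 0)"
    using integral_dominated_convergence[OF m0 sm iw lim0 bd] by simp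
  then have "(\<lambda>n. lebesgue_integral lborel (s n)) \<longlonglongrightarrow> 0" by simp
  from order_tendstoD(2)[OF this e] obtain n where n: "lebesgue_integral lborel (s n) < e"
    by (auto simp: eventually_sequentially)
  have "(LINT x:{0..1}|lborel. (cmod (f x - (if cmod (indicator {0..1} x *\<^sub>R f x) \<le> real n then indicator {0..1} x *\<^sub>R f x else 0)))^2)
      = lebesgue_integral lborel (s n)"
    unfolding set_lebesgue_integral_def s_def F_def
    by (intro Bochner_Integration.integral_cong) (auto simp: indicator_def)
  then show ?thesis using n by (intro exI[of _ n]) simp
qed

lemma trunc_bdd:
  assumes Lf: "L2 f"
  shows "bddfun (\<lambda>x. if cmod (indicator {0..1} x *\<^sub>R f x) \<le> real n then indicator {0..1} x *\<^sub>R f x else 0) (real n)"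
proof
  have [measurable]: "(\<lambda>x. indicator {0..1} x *\<^sub>R f x) \<in> borel_measurable borel"
    using L2_meas[OF Lf] by simp
  show "(\<lambda>x. if cmod (indicator {0..1} x *\<^sub>R f x) \<le> real n then indicator {0..1} x *\<^sub>R f x else 0) \<in> borel_measurable borel"
    by measurable
qed auto

definition kp :: "nat \<Rightarrow> real \<Rightarrow> complex" where "kp n x = complex_of_real (x ^ n)"
definition dkp :: "nat \<Rightarrow> real \<Rightarrow> complex" where "dkp n x = complex_of_real (real n * x ^ (n - 1))"

lemma kp_W21: "W21 (kp n) (dkp n)"
  unfolding W21_def
proof (intro conjI ballI)
  show "L2 (dkp n)" unfolding dkp_def by (intro cont_L2 continuous_intros)
  fix x :: real assume x: "x \<in> {0..1}"
  have "(LINT t:{0..x}|lborel. real n * t ^ (n - 1)) = x ^ n - 0 ^ n"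
    unfolding set_lebesgue_integral_def
  proof (rule integral_FTC_atLeastAtMost)
    show "0 \<le> x" using x by simp
    show "((\<lambda>t. t ^ n) has_vector_derivative real n * t ^ (n - 1)) (at t within {0..x})" for t
      using DERIV_pow[of n t "{0..x}"] by (simp add: has_real_derivative_iff_has_vector_derivative)
    show "continuous_on {0..x} (\<lambda>t. real n * t ^ (n - 1))" by (intro continuous_intros)
  qed
  then have "(LINT t:{0..x}|lborel. dkp n t) = kp n x - kp n 0"
    unfolding dkp_def kp_def set_integral_complex_of_real by simp
  then show "kp n x = kp n 0 + (LINT t:{0..x}|lborel. dkp n t)" by simp
qed

lemma kp_L2: "L2 (kp n)" unfolding kp_def by (intro cont_L2 continuous_intros)

lemma kp_small_ip:
  assumes Lv: "L2 v"
  shows "(\<lambda>n. ip (kp n) v) \<longlonglongrightarrow> 0"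
proof -
  define V where "V x = indicator {0..1} x *\<^sub>R v x" for x :: real
  have Vm[measurable]: "V \<in> borel_measurable lborel" using L2_meas[OF Lv] by (simp add: V_def[abs_def])
  define s where "s n x = complex_of_real (x ^ n) * cnj (V x)" for n :: nat and x
  have sm: "s n \<in> borel_measurable lborel" for n unfolding s_def[abs_def] by measurable
  have "integrable lborel V"
    using L2_int[OF Lv] by (simp add: set_integrable_def V_def[abs_def])
  then have iw: "integrable lborel (\<lambda>x. cmod (V x))" by (rule integrable_norm)
  have m0: "(\<lambda>x. 0::complex) \<in> borel_measurable lborel" by simp
  have lim0: "AE x in lborel. (\<lambda>n. s n x) \<longlonglongrightarrow> 0"
    using AE_lborel_singleton[of 1]
  proof eventually_elim
    case (elim x)
    show ?case
    proof (cases "x \<in> {0..1}")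
      case True
      then have "norm x < 1" using elim by auto
      then have "(\<lambda>n. complex_of_real (x ^ n) * cnj (V x)) \<longlonglongrightarrow> complex_of_real 0 * cnj (V x)"
        by (intro tendsto_intros LIMSEQ_power_zero)
      then show ?thesis by (simp add: s_def)
    next
      case False
      then show ?thesis by (simp add: s_def V_def)
    qed
  qed
  have bd: "AE x in lborel. norm (s n x) \<le> cmod (V x)" for n
  proof (intro AE_I2)
    fix x
    show "norm (s n x) \<le> cmod (V x)"
    proof (cases "x \<in> {0..1}")
      case True
      then have "\<bar>x\<bar> ^ n \<le> 1" by (intro power_le_one) auto
      then show ?thesis unfolding s_def norm_mult
        by (simp add: norm_power mult_left_le_one_le)
    next
      case False
      then show ?thesis by (simp add: s_def V_def)
    qed
  qed
  have "(\<lambda>n. lebesgue_integral lborel (s n)) \<longlonglongrightarrow> lebesgue_integral lborel (\<lambda>x. 0)"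
    using integral_dominated_convergence[OF m0 sm iw lim0 bd] by simp
  moreover have "ip (kp n) v = lebesgue_integral lborel (s n)" for n
    unfolding ip_def set_lebesgue_integral_def s_def kp_def V_def
    by (intro Bochner_Integration.integral_cong) (auto simp: indicator_def)
  ultimately show ?thesis by simp
qed

lemma kp_small_norm:
  "(\<lambda>n. LINT x:{0..1}|lborel. (cmod (kp n x))^2) \<longlonglongrightarrow> 0"
proof -
  define s where "s n x = indicator {0..1} x * (x ^ n)^2" for n :: nat and x :: real
  have sm: "s n \<in> borel_measurable lborel" for n unfolding s_def[abs_def] by measurable
  have iw: "integrable lborel (\<lambda>x::real. indicator {0..1} x *\<^sub>R (1::real))"
    by (rule si_const[unfolded set_integrable_def])
  have m0: "(\<lambda>x. 0::real) \<in> borel_measurable lborel" by simp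
  have lim0: "AE x in lborel. (\<lambda>n. s n x) \<longlonglongrightarrow> 0"
    using AE_lborel_singleton[of 1]
  proof eventually_elim
    case (elim x)
    show ?case
    proof (cases "x \<in> {0..1}")
      case True
      then have "norm x < 1" using elim by auto
      then have "(\<lambda>n. indicator {0..1} x * (x ^ n)^2) \<longlonglongrightarrow> indicator {0..1} x * 0^2"
        by (intro tendsto_intros LIMSEQ_power_zero)
      then show ?thesis by (simp add: s_def)
    next
      case False
      then show ?thesis by (simp add: s_def)
    qed
  qed
  have bd: "AE x in lborel. norm (s n x) \<le> indicator {0..1} x *\<^sub>R (1::real)" for n
  proof (intro AE_I2)
    fix x :: real
    show "norm (s n x) \<le> indicator {0..1} x *\<^sub>R (1::real)"
    proof (cases "x \<in> {0..1}")
      case True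
      then have "(x ^ n)^2 \<le> 1" by (intro power_le_one) auto
      then show ?thesis using True by (simp add: s_def)
    next
      case False
      then show ?thesis by (simp add: s_def)
    qed
  qed
  have "(\<lambda>n. lebesgue_integral lborel (s n)) \<longlonglongrightarrow> lebesgue_integral lborel (\<lambda>x. 0)"
    using integral_dominated_convergence[OF m0 sm iw lim0 bd] by simp
  moreover have "(LINT x:{0..1}|lborel. (cmod (kp n x))^2) = lebesgue_integral lborel (s n)" for n
    unfolding set_lebesgue_integral_def s_def kp_def
    by (intro Bochner_Integration.integral_cong) (auto simp: indicator_def norm_power)
  ultimately show ?thesis by simp
qed

lemma L2_lin:
  assumes La: "L2 a" and Lb: "L2 b"
  shows "L2 (\<lambda>x. a x + c * b x)"
  unfolding L2_def
proof
  have [measurable]: "(\<lambda>x. indicator {0..1} x *\<^sub>R a x) \<in> borel_measurable lborel"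
    "(\<lambda>x. indicator {0..1} x *\<^sub>R b x) \<in> borel_measurable lborel"
    using L2_meas[OF La] L2_meas[OF Lb] by auto
  have "(\<lambda>x::real. indicator {0..1} x *\<^sub>R (a x + c * b x)) = (\<lambda>x. indicator {0..1} x *\<^sub>R a x + c * (indicator {0..1} x *\<^sub>R b x))"
    by (auto simp: indicator_def fun_eq_iff)
  also have "\<dots> \<in> borel_measurable lborel" by measurable
  finally show m: "(\<lambda>x::real. indicator {0..1} x *\<^sub>R (a x + c * b x)) \<in> borel_measurable lborel" .
  show "set_integrable lborel {0..1} (\<lambda>x. (cmod (a x + c * b x))\<^sup>2)"
  proof (rule set_integrable_bound)
    show "set_integrable lborel {0..1} (\<lambda>x. 2 * (cmod (a x))^2 + (2 * (cmod c)^2) * (cmod (b x))^2)"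
      using L2_sq[OF La] L2_sq[OF Lb] by (intro set_integral_add(1) set_integrable_mult_right) auto
    have "(\<lambda>x::real. indicator {0..1} x *\<^sub>R (cmod (a x + c * b x))\<^sup>2) = (\<lambda>x. (cmod (indicator {0..1} x *\<^sub>R (a x + c * b x)))\<^sup>2)"
      by (auto simp: indicator_def fun_eq_iff)
    also have "\<dots> \<in> borel_measurable lborel" using m by measurable
    finally show "set_borel_measurable lborel {0..1} (\<lambda>x. (cmod (a x + c * b x))\<^sup>2)"
      by (simp add: set_borel_measurable_def)
    show "AE x in lborel. x \<in> {0..1} \<longrightarrow> norm ((cmod (a x + c * b x))\<^sup>2) \<le> norm (2 * (cmod (a x))^2 + (2 * (cmod c)^2) * (cmod (b x))^2)"
    proof (intro AE_I2 impI)
      fix x :: real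
      have t: "cmod (a x + c * b x) \<le> cmod (a x) + cmod c * cmod (b x)"
        using norm_triangle_ineq[of "a x" "c * b x"] by (simp add: norm_mult)
      have "(cmod (a x + c * b x))^2 \<le> (cmod (a x) + cmod c * cmod (b x))^2"
        using t by (intro power_mono) auto
      also have "\<dots> \<le> 2 * (cmod (a x))^2 + (2 * (cmod c)^2) * (cmod (b x))^2"
      proof -
        have "0 \<le> (cmod (a x) - cmod c * cmod (b x))^2" by simp
        then show ?thesis by (simp add: power2_eq_square algebra_simps)
      qed
      finally show "norm ((cmod (a x + c * b x))\<^sup>2) \<le> norm (2 * (cmod (a x))^2 + (2 * (cmod c)^2) * (cmod (b x))^2)"
        by simp
    qed
  qed
qed

lemma ip_left2:
  assumes "L2 f" "L2 g" "L2 h"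
  shows "ip (\<lambda>x. f x + c * g x) h = ip f h + c * ip g h"
proof -
  have i1: "set_integrable lborel {0..1} (\<lambda>x. f x * cnj (h x))" using L2_prod[OF assms(1,3)] .
  have i2: "set_integrable lborel {0..1} (\<lambda>x. c * (g x * cnj (h x)))" using L2_prod[OF assms(2,3)] by simp
  have "ip (\<lambda>x. f x + c * g x) h = (LINT x:{0..1}|lborel. f x * cnj (h x) + c * (g x * cnj (h x)))"
    unfolding ip_def by (simp add: algebra_simps)
  also have "\<dots> = ip f h + c * ip g h"
    unfolding ip_def using i1 i2 by (simp add: set_integral_add)
  finally show ?thesis .
qed

lemma sq3: "(cmod (a + b + d))^2 \<le> 3 * ((cmod a)^2 + (cmod b)^2 + (cmod d)^2)"
proof -
  have "cmod (a + b + d) \<le> cmod a + cmod b + cmod d"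
    by (metis add_mono norm_triangle_ineq order_trans order_refl)
  then have "(cmod (a + b + d))^2 \<le> (cmod a + cmod b + cmod d)^2" by (intro power_mono) auto
  also have "\<dots> \<le> 3 * ((cmod a)^2 + (cmod b)^2 + (cmod d)^2)"
  proof -
    have "0 \<le> (cmod a - cmod b)^2 + (cmod b - cmod d)^2 + (cmod a - cmod d)^2" by simp
    then show ?thesis by (simp add: power2_eq_square algebra_simps)
  qed
  finally show ?thesis .
qed

lemma density:
  assumes L1: "L2 v1" and L2v: "L2 v2" and Lff: "L2 f" and e: "e > 0"
  shows "\<exists>psi dpsi. domA v1 v2 \<alpha> psi dpsi \<and> (LINT x:{0..1}|lborel. (cmod (f x - psi x))^2) < e"
proof -
  define E where "E = exp (\<i> * complex_of_real \<alpha>)"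
  have cE: "cmod E = 1" unfolding E_def by simp
  define e3 where "e3 = e / 9"
  have e3: "e3 > 0" using e by (simp add: e3_def)
  obtain n :: nat where n: "(LINT x:{0..1}|lborel. (cmod (f x - (if cmod (indicator {0..1} x *\<^sub>R f x) \<le> real n then indicator {0..1} x *\<^sub>R f x else 0)))^2) < e3"
    using trunc[OF Lff e3] by blast
  define g where "g = (\<lambda>x. if cmod (indicator {0..1} x *\<^sub>R f x) \<le> real n then indicator {0..1} x *\<^sub>R f x else 0)"
  have bg: "bddfun g (real n)" unfolding g_def by (rule trunc_bdd[OF Lff])
  have I1: "(LINT x:{0..1}|lborel. (cmod (f x - g x))^2) < e3" using n unfolding g_def .
  have Lg: "L2 g"
  proof (rule bdd_L2)
    have [measurable]: "g \<in> borel_measurable borel" using bddfun.gm[OF bg] .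
    show "(\<lambda>x. indicator {0..1} x *\<^sub>R g x) \<in> borel_measurable lborel" by measurable
    show "cmod (g x) \<le> real n" for x using bddfun.gb[OF bg] .
  qed
  obtain h where h: "h > 0" and I2: "(LINT x:{0..1}|lborel. (cmod (g x - bddfun.S g h x))^2) < e3"
    using bddfun.S_approx[OF bg e3] by blast
  define Sf where "Sf = bddfun.S g h"
  define dSf where "dSf = bddfun.dS g h"
  have WS: "W21 Sf dSf" unfolding Sf_def dSf_def by (rule bddfun.S_W21[OF bg h])
  have LS: "L2 Sf" by (rule W21_L2[OF WS])
  have LdS: "L2 dSf" using WS unfolding W21_def by blast
  have I2': "(LINT x:{0..1}|lborel. (cmod (g x - Sf x))^2) < e3" using I2 unfolding Sf_def .
  define Lfun where "Lfun psi = psi 1 + \<i> * ip psi v2 - E * (psi 0 - \<i> * ip psi v1)" for psi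
  define A where "A = Lfun Sf"
  define \<delta> where "\<delta> = e3 / (4 * ((cmod A)^2 + 1))"
  have \<delta>: "\<delta> > 0" using e3 unfolding \<delta>_def by (intro divide_pos_pos) (auto intro: add_nonneg_pos)
  have ev1: "eventually (\<lambda>m. cmod (ip (kp m) v1) < 1/4) sequentially"
    using tendstoD[OF kp_small_ip[OF L1], of "1/4"] by (simp add: dist_norm)
  have ev2: "eventually (\<lambda>m. cmod (ip (kp m) v2) < 1/4) sequentially"
    using tendstoD[OF kp_small_ip[OF L2v], of "1/4"] by (simp add: dist_norm)
  have ev3: "eventually (\<lambda>m. (LINT x:{0..1}|lborel. (cmod (kp m x))^2) < \<delta>) sequentially"
    using order_tendstoD(2)[OF kp_small_norm \<delta>] .
  have ev4: "eventually (\<lambda>m. (1::nat) \<le> m) sequentially" by (rule eventually_ge_at_top)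
  from eventually_conj[OF ev1 eventually_conj[OF ev2 eventually_conj[OF ev3 ev4]]]
  obtain N where "\<forall>m\<ge>N. cmod (ip (kp m) v1) < 1/4 \<and> cmod (ip (kp m) v2) < 1/4 \<and>
      (LINT x:{0..1}|lborel. (cmod (kp m x))^2) < \<delta> \<and> 1 \<le> m"
    unfolding eventually_sequentially by blast
  then obtain m where m1: "cmod (ip (kp m) v1) < 1/4" and m2: "cmod (ip (kp m) v2) < 1/4"
    and m3: "(LINT x:{0..1}|lborel. (cmod (kp m x))^2) < \<delta>" and m4: "1 \<le> m" by blast
  define B where "B = Lfun (kp m)"
  have kp0: "kp m 0 = 0" and kp1: "kp m 1 = 1" using m4 by (auto simp: kp_def)
  have B: "B - 1 = \<i> * ip (kp m) v2 + \<i> * E * ip (kp m) v1"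
    unfolding B_def Lfun_def kp0 kp1 by (simp add: algebra_simps)
  have "cmod (B - 1) \<le> cmod (\<i> * ip (kp m) v2) + cmod (\<i> * E * ip (kp m) v1)"
    unfolding B by (rule norm_triangle_ineq)
  also have "\<dots> = cmod (ip (kp m) v2) + cmod (ip (kp m) v1)" by (simp add: norm_mult cE)
  finally have "cmod (B - 1) < 1/2" using m1 m2 by linarith
  moreover have "1 \<le> cmod B + cmod (B - 1)"
    using norm_triangle_ineq4[of B "B - 1"] by simp
  ultimately have Bge: "cmod B \<ge> 1/2" by linarith
  then have B0: "B \<noteq> 0" by auto
  define c where "c = - A / B"
  have cb: "cmod c \<le> 2 * cmod A"
  proof -
    have "cmod c = cmod A / cmod B" by (simp add: c_def norm_divide)
    also have "\<dots> \<le> cmod A / (1/2)" using Bge by (intro divide_left_mono) auto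
    finally show ?thesis by simp
  qed
  define psi where "psi = (\<lambda>x. Sf x + c * kp m x)"
  define dpsi where "dpsi = (\<lambda>x. dSf x + c * dkp m x)"
  have Lk: "L2 (kp m)" by (rule kp_L2)
  have Ldk: "L2 (dkp m)" using kp_W21[of m] unfolding W21_def by blast
  have Wpsi: "W21 psi dpsi"
    unfolding W21_def
  proof (intro conjI ballI)
    show "L2 dpsi" unfolding dpsi_def by (rule L2_lin[OF LdS Ldk])
    fix x :: real assume x: "x \<in> {0..1}"
    have s1: "set_integrable lborel {0..x} dSf"
      by (rule set_integrable_subset[OF L2_int[OF LdS]]) (use x in auto)
    have s2': "set_integrable lborel {0..x} (dkp m)"
      by (rule set_integrable_subset[OF L2_int[OF Ldk]]) (use x in auto)
    then have s2: "set_integrable lborel {0..x} (\<lambda>t. c * dkp m t)" by simp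
    have "(LINT t:{0..x}|lborel. dpsi t) = (LINT t:{0..x}|lborel. dSf t) + (LINT t:{0..x}|lborel. c * dkp m t)"
      unfolding dpsi_def by (rule set_integral_add(2)[OF s1 s2])
    also have "(LINT t:{0..x}|lborel. c * dkp m t) = c * (LINT t:{0..x}|lborel. dkp m t)" by simp
    finally have eq: "(LINT t:{0..x}|lborel. dpsi t) = (LINT t:{0..x}|lborel. dSf t) + c * (LINT t:{0..x}|lborel. dkp m t)" .
    have "Sf x = Sf 0 + (LINT t:{0..x}|lborel. dSf t)" using WS x unfolding W21_def by blast
    moreover have "kp m x = kp m 0 + (LINT t:{0..x}|lborel. dkp m t)" using kp_W21[of m] x unfolding W21_def by blast
    ultimately show "psi x = psi 0 + (LINT t:{0..x}|lborel. dpsi t)"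
      unfolding psi_def eq by (simp add: algebra_simps)
  qed
  have ipv: "ip psi v = ip Sf v + c * ip (kp m) v" if "L2 v" for v
    unfolding psi_def by (rule ip_left2[OF LS Lk that])
  have "Lfun psi = A + c * B"
    unfolding Lfun_def A_def B_def ipv[OF L1] ipv[OF L2v]
    by (simp add: psi_def algebra_simps)
  also have "\<dots> = 0" using B0 by (simp add: c_def)
  finally have Lpsi: "Lfun psi = 0" .
  have D: "domA v1 v2 \<alpha> psi dpsi"
    unfolding domA_def using Wpsi Lpsi by (simp add: Lfun_def E_def)
  have Lpsi2: "L2 psi" by (rule W21_L2[OF Wpsi])
  have q1: "set_integrable lborel {0..1} (\<lambda>x. (cmod (f x - g x))^2)"
    using L2_sq[OF L2_lin[OF Lff Lg, of "-1"]] by simp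
  have q2: "set_integrable lborel {0..1} (\<lambda>x. (cmod (g x - Sf x))^2)"
    using L2_sq[OF L2_lin[OF Lg LS, of "-1"]] by simp
  have q3: "set_integrable lborel {0..1} (\<lambda>x. (cmod (kp m x))^2)" using L2_sq[OF Lk] .
  have q0: "set_integrable lborel {0..1} (\<lambda>x. (cmod (f x - psi x))^2)"
    using L2_sq[OF L2_lin[OF Lff Lpsi2, of "-1"]] by simp
  have "(LINT x:{0..1}|lborel. (cmod (f x - psi x))^2)
      \<le> (LINT x:{0..1}|lborel. 3 * (cmod (f x - g x))^2 + 3 * (cmod (g x - Sf x))^2 + (3 * (cmod c)^2) * (cmod (kp m x))^2)"
  proof (rule set_integral_mono[OF q0])
    show "set_integrable lborel {0..1} (\<lambda>x. 3 * (cmod (f x - g x))^2 + 3 * (cmod (g x - Sf x))^2 + (3 * (cmod c)^2) * (cmod (kp m x))^2)"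
      using q1 q2 q3 by (intro set_integral_add(1) set_integrable_mult_right) auto
    fix x :: real
    have "f x - psi x = (f x - g x) + (g x - Sf x) + (- c * kp m x)" by (simp add: psi_def)
    then have "(cmod (f x - psi x))^2 \<le> 3 * ((cmod (f x - g x))^2 + (cmod (g x - Sf x))^2 + (cmod (- c * kp m x))^2)"
      using sq3 by metis
    then show "(cmod (f x - psi x))^2 \<le> 3 * (cmod (f x - g x))^2 + 3 * (cmod (g x - Sf x))^2 + (3 * (cmod c)^2) * (cmod (kp m x))^2"
      by (simp add: norm_mult power_mult_distrib algebra_simps)
  qed
  also have "\<dots> = 3 * (LINT x:{0..1}|lborel. (cmod (f x - g x))^2) + 3 * (LINT x:{0..1}|lborel. (cmod (g x - Sf x))^2)
      + (3 * (cmod c)^2) * (LINT x:{0..1}|lborel. (cmod (kp m x))^2)"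
    using q1 q2 q3 by (simp add: set_integral_add set_integrable_mult_right)
  also have "\<dots> < e"
  proof -
    have I3nn: "0 \<le> (LINT x:{0..1}|lborel. (cmod (kp m x))^2)"
      unfolding set_lebesgue_integral_def by (intro Bochner_Integration.integral_nonneg) (simp add: indicator_def)
    have "(cmod c)^2 \<le> (2 * cmod A)^2" using cb by (intro power_mono) auto
    then have "(cmod c)^2 * (LINT x:{0..1}|lborel. (cmod (kp m x))^2) \<le> (2 * cmod A)^2 * \<delta>"
      using m3 I3nn by (intro mult_mono) auto
    also have "\<dots> = e3 * ((cmod A)^2 / ((cmod A)^2 + 1))"
    proof -
      have "0 \<le> cmod A * cmod A" by simp
      then have "1 + cmod A * cmod A \<noteq> 0" "4 + cmod A * (cmod A * 4) \<noteq> 0" by linarith+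
      then show ?thesis unfolding \<delta>_def by (simp add: field_simps power2_eq_square)
    qed
    also have "\<dots> \<le> e3 * 1"
    proof (intro mult_left_mono)
      have "0 \<le> (cmod A)^2" by simp
      then have "0 < (cmod A)^2 + 1" by linarith
      then show "(cmod A)^2 / ((cmod A)^2 + 1) \<le> 1" by (simp add: divide_le_eq_1)
    qed (use e3 in auto)
    finally have "(cmod c)^2 * (LINT x:{0..1}|lborel. (cmod (kp m x))^2) \<le> e3" by simp
    then show ?thesis using I1 I2' unfolding e3_def by simp
  qed
  finally show ?thesis using D by blast
qed

theorem lemma5p2:
  fixes v1 v2 :: "real \<Rightarrow> complex" and \<alpha> :: real
  assumes "L2 v1" and "L2 v2" and "\<alpha> \<in> {0..<2*pi}"
  shows "(\<forall>f. L2 f \<longrightarrow> (\<forall>e>0. \<exists>psi dpsi. domA v1 v2 \<alpha> psi dpsi \<and>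
              (LINT x:{0..1}|lborel. (cmod (f x - psi x))^2) < e))
       \<and> (\<forall>psi dpsi phi dphi. domA v1 v2 \<alpha> psi dpsi \<and> domA v1 v2 \<alpha> phi dphi \<longrightarrow>
              ip (opA v1 v2 psi dpsi) phi = ip psi (opA v1 v2 phi dphi))"
proof (intro conjI allI impI)
  fix f e assume "L2 f" "(e::real) > 0"
  then show "\<exists>psi dpsi. domA v1 v2 \<alpha> psi dpsi \<and> (LINT x:{0..1}|lborel. (cmod (f x - psi x))^2) < e"
    using density[OF assms(1,2)] by blast
next
  fix psi dpsi phi dphi
  assume "domA v1 v2 \<alpha> psi dpsi \<and> domA v1 v2 \<alpha> phi dphi"
  moreover have "exp (\<i> * complex_of_real \<alpha>) * cnj (exp (\<i> * complex_of_real \<alpha>)) = 1"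
  proof -
    have "complex_of_real ((cmod (exp (\<i> * complex_of_real \<alpha>)))^2) = exp (\<i> * complex_of_real \<alpha>) * cnj (exp (\<i> * complex_of_real \<alpha>))"
      by (rule complex_norm_square)
    then show ?thesis by simp
  qed
  ultimately show "ip (opA v1 v2 psi dpsi) phi = ip psi (opA v1 v2 phi dphi)"
    using symm[OF assms(1,2)] by blast
qed


end
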